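(* Let $(X,\mathbf R)$ be a symmetric association scheme with $D$ classes, metric with respect to $A_0,\dots,A_D$. Fix $x\in X$, let $T=T(x)$, let $\chi\in V$ be a code and set $\delta_x=\delta_x(\chi)$. Suppose $t\in\{1,\dots,D\}$ is such that $$|\{j\in W_s^*: E_j\chi\ne0\}|\le \delta_x-r(W)$$ for every irreducible $T$-module $W\subseteq V$ with $1\le r(W)\le t$. If every irreducible $T$-module in $V$ with endpoint at most $t$ is thin, then $F\chi$ is a relative $t$-codesign with respect to $x$ for every $F\in T$.
   Context: $(X,\mathbf R)$ is a symmetric association scheme with associate matrices $A_0=I,\dots,A_D$, Bose–Mesner algebra $M$, primitive idempotents $E_0=|X|^{-1}J,\dots,E_D$; metric means $(X,R_1)$ is distance-regular with $R_i$ its distance-$i$ relation. $V=\mathbb C^X$ with standard basis $\{\hat y\}$ and standard Hermitian inner product. $E_i^*(x)$ is diagonal with $(E_i^*(x))_{yy}=(A_i)_{xy}$; $A_i^*(x)$ is diagonal with $(A_i^*(x))_{yy}=|X|(E_i)_{xy}$; $T(x)$ is the algebra generated by $M$ and the $A_i^*(x)$. For an irreducible $T(x)$-module $W$: dual support $W_s^*=\{j:E_jW\ne0\}$, endpoint $r(W)=\min\{i:E_i^*(x)W\neq 0\}$, thin means $\dim E_i^*(x)W\le1$ for all $i$. A code is a vector $\chi\notin E_0V$ with $\chi\notin E_0^*(z)V$ for all $z\in X$. $\delta_x(\chi)=\min\{i\ne 0:E_i^*(x)\chi\ne0\}$. $\psi$ is a relative $t$-codesign with respect to $x$ if $E_i^*(x)\psi$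 and $A_i\hat x$ are linearly dependent for all $1\le i\le t$. *)

theory Defs
  imports "HOL-Analysis.Analysis"
begin

text \<open>The vertex set X is the finite type 'x (X = UNIV). V = complex ^ 'x, matrices are
complex ^ 'x ^ 'x. The scheme is given by R :: 'x => 'x => nat, where R y z = i means
(y,z) is in the i-th relation R_i.\<close>

definition adj :: "('x::finite \<Rightarrow> 'x \<Rightarrow> nat) \<Rightarrow> nat \<Rightarrow> complex^'x^'x" where
  "adj R i = (\<chi> y z. if R y z = i then 1 else 0)"

definition sym_assoc_scheme :: "('x::finite \<Rightarrow> 'x \<Rightarrow> nat) \<Rightarrow> nat \<Rightarrow> bool" where
  "sym_assoc_scheme R D \<longleftrightarrow>
     (\<forall>y z. R y z \<le> D) \<and>
     (\<forall>y z. R y z = 0 \<longleftrightarrow> y = z) \<and>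
     (\<forall>y z. R y z = R z y) \<and>
     (\<forall>i\<le>D. \<exists>y z. R y z = i) \<and>
     (\<forall>i\<le>D. \<forall>j\<le>D. \<forall>k\<le>D. \<exists>p. \<forall>y z. R y z = k \<longrightarrow>
         card {w. R y w = i \<and> R w z = j} = p)"

definition metric_scheme :: "('x::finite \<Rightarrow> 'x \<Rightarrow> nat) \<Rightarrow> bool" where
  "metric_scheme R \<longleftrightarrow>
     (\<forall>y z. (y, z) \<in> {(u, v). R u v = 1} ^^ (R y z) \<and>
            (\<forall>m < R y z. (y, z) \<notin> {(u, v). R u v = 1} ^^ m))"

definition bose_mesner :: "('x::finite \<Rightarrow> 'x \<Rightarrow> nat) \<Rightarrow> nat \<Rightarrow> (complex^'x^'x) set" where
  "bose_mesner R D = {M. \<exists>c. M = (\<chi> y z. \<Sum>j\<le>D. c j * adj R j $ y $ z)}"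

text \<open>E_0,...,E_D are the primitive idempotents of the Bose--Mesner algebra, with
E_0 = |X|^{-1} J: a complete system of D+1 nonzero pairwise orthogonal idempotents of M
(M has dimension D+1, so these are exactly the primitive idempotents).\<close>
definition primitive_idempotents ::
  "('x::finite \<Rightarrow> 'x \<Rightarrow> nat) \<Rightarrow> nat \<Rightarrow> (nat \<Rightarrow> complex^'x^'x) \<Rightarrow> bool" where
  "primitive_idempotents R D E \<longleftrightarrow>
     (\<forall>i\<le>D. E i \<in> bose_mesner R D \<and> E i \<noteq> 0) \<and>
     (\<forall>i\<le>D. \<forall>j\<le>D. E i ** E j = (if i = j then E i else 0)) \<and>
     (\<Sum>i\<le>D. E i) = mat 1 \<and>
     E 0 = (\<chi> y z. 1 / of_nat CARD('x))"

definition Estar :: "('x::finite \<Rightarrow> 'x \<Rightarrow> nat) \<Rightarrow> nat \<Rightarrow> 'x \<Rightarrow> complex^'x^'x" where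
  "Estar R i x = (\<chi> y z. if y = z then adj R i $ x $ y else 0)"

definition Astar :: "(nat \<Rightarrow> complex^'x::finite^'x) \<Rightarrow> nat \<Rightarrow> 'x \<Rightarrow> complex^'x^'x" where
  "Astar E i x = (\<chi> y z. if y = z then of_nat CARD('x) * E i $ x $ y else 0)"

inductive_set terwilliger ::
  "('x::finite \<Rightarrow> 'x \<Rightarrow> nat) \<Rightarrow> nat \<Rightarrow> (nat \<Rightarrow> complex^'x^'x) \<Rightarrow> 'x \<Rightarrow> (complex^'x^'x) set"
  for R D E x where
  gen_A: "i \<le> D \<Longrightarrow> adj R i \<in> terwilliger R D E x"
| gen_Astar: "i \<le> D \<Longrightarrow> Astar E i x \<in> terwilliger R D E x"
| add: "A \<in> terwilliger R D E x \<Longrightarrow> B \<in> terwilliger R D E x \<Longrightarrow> A + B \<in> terwilliger R D E x"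
| scale: "A \<in> terwilliger R D E x \<Longrightarrow> (\<chi> y z. c * A $ y $ z) \<in> terwilliger R D E x"
| mult: "A \<in> terwilliger R D E x \<Longrightarrow> B \<in> terwilliger R D E x \<Longrightarrow> A ** B \<in> terwilliger R D E x"

definition is_module :: "(complex^'x::finite^'x) set \<Rightarrow> (complex^'x) set \<Rightarrow> bool" where
  "is_module T W \<longleftrightarrow> vec.subspace W \<and> (\<forall>F\<in>T. \<forall>w\<in>W. F *v w \<in> W)"

definition irreducible_module :: "(complex^'x::finite^'x) set \<Rightarrow> (complex^'x) set \<Rightarrow> bool" where
  "irreducible_module T W \<longleftrightarrow> is_module T W \<and> W \<noteq> {0} \<and>
     (\<forall>U. is_module T U \<and> U \<subseteq> W \<longrightarrow> U = {0} \<or> U = W)"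

definition dual_support :: "nat \<Rightarrow> (nat \<Rightarrow> complex^'x::finite^'x) \<Rightarrow> (complex^'x) set \<Rightarrow> nat set" where
  "dual_support D E W = {j. j \<le> D \<and> (\<exists>w\<in>W. E j *v w \<noteq> 0)}"

definition endpoint :: "('x::finite \<Rightarrow> 'x \<Rightarrow> nat) \<Rightarrow> 'x \<Rightarrow> (complex^'x) set \<Rightarrow> nat" where
  "endpoint R x W = (LEAST i. \<exists>w\<in>W. Estar R i x *v w \<noteq> 0)"

definition thin :: "('x::finite \<Rightarrow> 'x \<Rightarrow> nat) \<Rightarrow> 'x \<Rightarrow> (complex^'x) set \<Rightarrow> bool" where
  "thin R x W \<longleftrightarrow> (\<forall>i. vec.dim ((\<lambda>w. Estar R i x *v w) ` W) \<le> 1)"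

definition is_code ::
  "('x::finite \<Rightarrow> 'x \<Rightarrow> nat) \<Rightarrow> (nat \<Rightarrow> complex^'x^'x) \<Rightarrow> complex^'x \<Rightarrow> bool" where
  "is_code R E v \<longleftrightarrow> v \<notin> range (\<lambda>u. E 0 *v u) \<and> (\<forall>z. v \<notin> range (\<lambda>u. Estar R 0 z *v u))"

definition delta :: "('x::finite \<Rightarrow> 'x \<Rightarrow> nat) \<Rightarrow> 'x \<Rightarrow> complex^'x \<Rightarrow> nat" where
  "delta R x v = (LEAST i. i \<noteq> 0 \<and> Estar R i x *v v \<noteq> 0)"

definition rel_codesign :: "('x::finite \<Rightarrow> 'x \<Rightarrow> nat) \<Rightarrow> nat \<Rightarrow> 'x \<Rightarrow> complex^'x \<Rightarrow> bool" where
  "rel_codesign R t x \<psi> \<longleftrightarrow>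
     (\<forall>i. 1 \<le> i \<and> i \<le> t \<longrightarrow>
        (\<exists>a b. (a \<noteq> 0 \<or> b \<noteq> 0) \<and>
               a *s (Estar R i x *v \<psi>) + b *s (adj R i *v axis x 1) = 0))"

end

theory Submission
  imports Defs "HOL-Computational_Algebra.Polynomial"
begin

locale tw =
  fixes R :: "'x::finite \<Rightarrow> 'x \<Rightarrow> nat" and D :: nat and E :: "nat \<Rightarrow> complex^'x^'x" and x :: 'x
  assumes scheme: "sym_assoc_scheme R D"
    and metric: "metric_scheme R"
    and idem: "primitive_idempotents R D E"
begin

lemmas sch = scheme[unfolded sym_assoc_scheme_def]
lemma R_le: "R y z \<le> D" using sch[THEN conjunct1] by simp
lemma R0: "R y z = 0 \<longleftrightarrow> y = z" using sch[THEN conjunct2, THEN conjunct1] by simp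
lemma Rsym: "R y z = R z y" using sch[THEN conjunct2, THEN conjunct2, THEN conjunct1] by simp
lemma Rex: "i \<le> D \<Longrightarrow> \<exists>y z. R y z = i"
  using sch[THEN conjunct2, THEN conjunct2, THEN conjunct2, THEN conjunct1] by simp
lemma Rp: "i \<le> D \<Longrightarrow> j \<le> D \<Longrightarrow> k \<le> D \<Longrightarrow> \<exists>p. \<forall>y z. R y z = k \<longrightarrow>
         card {w. R y w = i \<and> R w z = j} = p"
  using sch[THEN conjunct2, THEN conjunct2, THEN conjunct2, THEN conjunct2] by simp
lemma Rrefl[simp]: "R y y = 0" using R0 by blast

lemma cnt: assumes "R y z = R y' z'"
  shows "card {w. R y w = i \<and> R w z = j} = card {w. R y' w = i \<and> R w z' = j}"
proof (cases "i \<le> D \<and> j \<le> D")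
  case True
  then obtain p where p: "\<forall>y z. R y z = R y' z' \<longrightarrow> card {w. R y w = i \<and> R w z = j} = p"
    using Rp[of i j "R y' z'"] R_le by blast
  show ?thesis using p[rule_format, of y z] p[rule_format, of y' z'] assms by simp
next
  case False
  have "{w. R y w = i \<and> R w z = j} = {}" "{w. R y' w = i \<and> R w z' = j} = {}"
    using False R_le[of y] R_le[of _ z] R_le[of y'] R_le[of _ z'] by fastforce+
  then show ?thesis by (simp only: card.empty)
qed

lemma valency: assumes "l \<le> D" shows "\<exists>y. R y x = l"
proof -
  obtain a b where ab: "R a b = l" using Rex assms by blast
  have "b \<in> {w. R a w = l \<and> R w a = l}" using ab Rsym[of b a] by simp
  then have "{w. R a w = l \<and> R w a = l} \<noteq> {}" by blast
  then have "card {w. R a w = l \<and> R w a = l} \<noteq> 0" by simp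
  then have "card {w. R x w = l \<and> R w x = l} \<noteq> 0" using cnt[of a a x x l l] by simp
  then obtain w where "R w x = l" by (metis (mono_tags, lifting) card.empty empty_Collect_eq)
  then show ?thesis by blast
qed

definition rel1 :: "('x \<times> 'x) set" where "rel1 = {(u, v). R u v = 1}"

lemma metric': "\<forall>y z. (y, z) \<in> rel1 ^^ R y z \<and> (\<forall>m < R y z. (y, z) \<notin> rel1 ^^ m)"
  using metric unfolding metric_scheme_def rel1_def .

lemma relpow_R: "(y, z) \<in> rel1 ^^ R y z"
  using metric' by simp

lemma relpow_le: assumes "(y, z) \<in> rel1 ^^ m" shows "R y z \<le> m"
proof (rule ccontr)
  assume "\<not> R y z \<le> m"
  then have "m < R y z" by simp
  then have "(y, z) \<notin> rel1 ^^ m" using metric' by simp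
  then show False using assms by simp
qed

lemma tri: "R y z \<le> R y w + R w z"
proof -
  have "(y, z) \<in> rel1 ^^ (R y w + R w z)"
    unfolding relpow_add using relpow_R[of y w] relpow_R[of w z] by (rule relcompI)
  then show ?thesis by (rule relpow_le)
qed

lemma step_down: assumes "R y z = Suc i" shows "\<exists>w. R y w = 1 \<and> R w z = i"
proof -
  have "(y, z) \<in> rel1 ^^ Suc i" using relpow_R[of y z] assms by simp
  then obtain w where "(y, w) \<in> rel1" "(w, z) \<in> rel1 ^^ i" by (meson relpow_Suc_D2)
  then have 1: "R y w = 1" and "R w z \<le> i" using relpow_le rel1_def by auto
  moreover have "Suc i \<le> 1 + R w z" using tri[of y z w] 1 assms by simp
  ultimately show ?thesis by (intro exI[of _ w]) auto
qed

end

lemma mv_axis: "((M::'a::comm_ring_1^'n^'m) *v axis z 1) $ y = M $ y $ z"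
  by (simp add: matrix_vector_mult_def axis_def if_distrib cong: if_cong)

lemma lincomb_mv:
  "(\<chi> y z. \<Sum>j\<in>S. a j * (M j :: 'a::comm_ring_1^'n^'m) $ y $ z) *v v = (\<Sum>j\<in>S. a j *s (M j *v v))"
  apply (simp add: vec_eq_iff matrix_vector_mult_def sum_component sum_distrib_left sum_distrib_right
      mult.assoc)
  apply (rule allI)
  apply (rule sum.swap)
  done

lemma matsum_mv: "(\<Sum>j\<in>S. (M j :: 'a::comm_ring_1^'n^'m)) *v v = (\<Sum>j\<in>S. M j *v v)"
  by (induction S rule: infinite_finite_induct) (auto simp: matrix_vector_mult_add_rdistrib)

lemma mat_eq_mv: "(\<And>v. (M::'a::comm_ring_1^'n^'m) *v v = N *v v) \<Longrightarrow> M = N"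
  by (metis mv_axis vec_eq_iff)

context tw begin

abbreviation "A \<equiv> adj R 1"
abbreviation "Es i \<equiv> Estar R i x"
abbreviation "TT \<equiv> terwilliger R D E x"
abbreviation "ex \<equiv> (axis x 1 :: complex^'x)"

definition bmf :: "complex^'x^'x \<Rightarrow> (nat \<Rightarrow> complex) \<Rightarrow> bool" where
  "bmf B c \<longleftrightarrow> (\<forall>y z. B $ y $ z = c (R y z))"

lemma adj_entry: "adj R i $ y $ z = (if R y z = i then 1 else 0)"
  by (simp add: adj_def)

lemma bmf_adj: "bmf (adj R i) (\<lambda>l. if l = i then 1 else 0)"
  by (simp add: bmf_def adj_entry)

lemma sum_ind: fixes c :: "nat \<Rightarrow> complex" assumes "k \<le> N"
  shows "(\<Sum>j\<le>N. c j * (if k = j then 1 else 0)) = c k"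
proof -
  have "(\<Sum>j\<le>N. c j * (if k = j then 1 else 0)) = (\<Sum>j\<le>N. if j = k then c j else 0)"
    by (rule sum.cong) auto
  also have "\<dots> = c k" using assms by (simp add: sum.delta')
  finally show ?thesis .
qed

lemma bmf_expand: assumes "bmf B c" shows "B = (\<chi> y z. \<Sum>j\<le>D. c j * adj R j $ y $ z)"
proof -
  have "B $ y $ z = (\<Sum>j\<le>D. c j * adj R j $ y $ z)" for y z
    unfolding adj_entry sum_ind[OF R_le] using assms unfolding bmf_def by simp
  then show ?thesis by (simp add: vec_eq_iff)
qed

lemma bm_iff: "B \<in> bose_mesner R D \<longleftrightarrow> (\<exists>c. bmf B c)"
proof
  assume "B \<in> bose_mesner R D"
  then obtain c where c: "B = (\<chi> y z. \<Sum>j\<le>D. c j * adj R j $ y $ z)" unfolding bose_mesner_def by blast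
  have "B $ y $ z = c (R y z)" for y z
    unfolding c adj_entry by (simp only: vec_lambda_beta sum_ind[OF R_le])
  then show "\<exists>c. bmf B c" unfolding bmf_def by blast
next
  assume "\<exists>c. bmf B c"
  then obtain c where c: "bmf B c" by blast
  then show "B \<in> bose_mesner R D" unfolding bose_mesner_def using bmf_expand by blast
qed

lemma bmf_mv: assumes "bmf B c" shows "B *v v = (\<Sum>l\<le>D. c l *s (adj R l *v v))"
proof -
  have "B *v v = (\<chi> y z. \<Sum>j\<le>D. c j * adj R j $ y $ z) *v v" using bmf_expand[OF assms] by simp
  also have "\<dots> = (\<Sum>l\<le>D. c l *s (adj R l *v v))" by (rule lincomb_mv)
  finally show ?thesis .
qed

lemma bm_inj: assumes "bmf B c" "bmf B' c'" "B *v ex = B' *v ex" shows "B = B'"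
proof -
  have "c l = c' l" if lD: "l \<le> D" for l
  proof -
    obtain y where y: "R y x = l" using valency[OF lD] by blast
    have "(B *v ex) $ y = (B' *v ex) $ y" using assms(3) by (rule arg_cong)
    then have "B $ y $ x = B' $ y $ x" by (simp only: mv_axis)
    moreover have "B $ y $ x = c l" using assms(1) y unfolding bmf_def by metis
    moreover have "B' $ y $ x = c' l" using assms(2) y unfolding bmf_def by metis
    ultimately show ?thesis by simp
  qed
  then have "B $ y $ z = B' $ y $ z" for y z using assms(1,2) R_le[of y z] unfolding bmf_def by metis
  then show ?thesis by (simp add: vec_eq_iff)
qed

lemmas idm = idem[unfolded primitive_idempotents_def]
lemma E_bm: "i \<le> D \<Longrightarrow> E i \<in> bose_mesner R D" using idm[THEN conjunct1] by simp
lemma E_nz: "i \<le> D \<Longrightarrow> E i \<noteq> 0" using idm[THEN conjunct1] by simp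
lemma E_orth: "i \<le> D \<Longrightarrow> j \<le> D \<Longrightarrow> E i ** E j = (if i = j then E i else 0)"
  using idm[THEN conjunct2, THEN conjunct1] by simp
lemma E_sum: "(\<Sum>i\<le>D. E i) = mat 1" using idm[THEN conjunct2, THEN conjunct2, THEN conjunct1] by simp
lemma E_0: "E 0 = (\<chi> y z. 1 / of_nat CARD('x))" using idm[THEN conjunct2, THEN conjunct2, THEN conjunct2] by simp

definition ec :: "nat \<Rightarrow> nat \<Rightarrow> complex" where "ec i = (SOME c. bmf (E i) c)"
lemma bmf_E: "i \<le> D \<Longrightarrow> bmf (E i) (ec i)"
  unfolding ec_def using E_bm bm_iff by (metis someI_ex)

lemma EE: "i \<le> D \<Longrightarrow> j \<le> D \<Longrightarrow> E i *v (E j *v v) = (if i = j then E i *v v else 0)"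
  by (simp add: matrix_vector_mul_assoc E_orth)

lemma Esum_v: "(\<Sum>i\<le>D. E i *v v) = v"
  using E_sum matsum_mv[of E "{..D}" v, symmetric] by simp

lemma E_ex_nz: "i \<le> D \<Longrightarrow> E i *v ex \<noteq> 0"
proof
  assume i: "i \<le> D" and "E i *v ex = 0"
  moreover have "bmf (0::complex^'x^'x) (\<lambda>_. 0)" by (simp add: bmf_def)
  ultimately have "E i = 0" using bm_inj[OF bmf_E[OF i]] by simp
  then show False using E_nz i by blast
qed

definition colE where "colE j = E j *v ex"
definition colA where "colA l = adj R l *v ex"

lemma colE_inj: "inj_on colE {..D}"
proof (rule inj_onI)
  fix i j assume ij: "i \<in> {..D}" "j \<in> {..D}" "colE i = colE j"
  show "i = j"
  proof (rule ccontr)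
    assume "i \<noteq> j"
    have "E j *v colE i = E j *v colE j" using ij by simp
    then have "colE j = 0" using \<open>i \<noteq> j\<close> ij EE[of j i ex] EE[of j j ex] by (simp add: colE_def)
    then show False using E_ex_nz ij by (simp add: colE_def)
  qed
qed

lemma colE_indep: "vec.independent (colE ` {..D})"
proof
  assume "vec.dependent (colE ` {..D})"
  then obtain j where j: "j \<le> D" "colE j \<in> vec.span (colE ` {..D} - {colE j})"
    unfolding vec.dependent_def by blast
  have sub: "colE ` {..D} - {colE j} \<subseteq> colE ` ({..D} - {j})" by blast
  have fin: "finite (colE ` ({..D} - {j}))" by simp
  obtain u where u: "colE j = (\<Sum>v\<in>colE ` ({..D} - {j}). u v *s v)"
    using vec.span_mono[OF sub] j(2) vec.span_finite[OF fin] by blast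
  have "E j *v colE j = (\<Sum>v\<in>colE ` ({..D} - {j}). u v *s (E j *v v))"
    by (subst u) (simp add: vec.sum vec.scale)
  also have "\<dots> = 0"
    by (rule sum.neutral) (auto simp: colE_def EE j(1))
  finally have "colE j = 0" using EE[of j j ex] j by (simp add: colE_def)
  then show False using E_ex_nz j by (simp add: colE_def)
qed

lemma colE_span: "colE ` {..D} \<subseteq> vec.span (colA ` {..D})"
proof
  fix v assume "v \<in> colE ` {..D}"
  then obtain j where j: "j \<le> D" "v = colE j" by blast
  have "v = (\<Sum>l\<le>D. ec j l *s colA l)" using bmf_mv[OF bmf_E[OF j(1)]] j by (simp add: colE_def colA_def)
  then show "v \<in> vec.span (colA ` {..D})"
    by (simp, intro vec.span_sum vec.span_scale vec.span_base) auto
qed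

lemma colA_in_span: "vec.span (colA ` {..D}) \<subseteq> vec.span (colE ` {..D})"
proof -
  have "vec.dim (vec.span (colA ` {..D})) \<le> card (colA ` {..D})"
    by (rule vec.dim_le_card) auto
  also have "\<dots> \<le> card {..D}" by (rule card_image_le) simp
  also have "\<dots> = card (colE ` {..D})" using card_image[OF colE_inj] by simp
  finally show ?thesis
    by (rule vec.card_ge_dim_independent[OF colE_span colE_indep])
qed

lemma bm_span: assumes "bmf B c"
  shows "\<exists>a. B = (\<chi> y z. \<Sum>j\<le>D. a j * E j $ y $ z)"
proof -
  have "B *v ex = (\<Sum>l\<le>D. c l *s colA l)" using bmf_mv[OF assms] by (simp add: colA_def)
  also have "\<dots> \<in> vec.span (colA ` {..D})" by (intro vec.span_sum vec.span_scale vec.span_base) auto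
  finally have "B *v ex \<in> vec.span (colE ` {..D})" using colA_in_span by blast
  then obtain u where u: "B *v ex = (\<Sum>v\<in>colE ` {..D}. u v *s v)"
    using vec.span_finite[of "colE ` {..D}"] by auto
  define a where "a j = u (colE j)" for j
  have Bex: "B *v ex = (\<Sum>j\<le>D. a j *s (E j *v ex))"
  proof -
    have "B *v ex = (\<Sum>j\<le>D. u (colE j) *s colE j)" unfolding u by (rule sum.reindex_cong[OF colE_inj refl refl])
    then show ?thesis by (simp add: a_def colE_def)
  qed
  define B' where "B' = (\<chi> y z. \<Sum>j\<le>D. a j * E j $ y $ z)"
  have "bmf B' (\<lambda>l. \<Sum>j\<le>D. a j * ec j l)"
    unfolding bmf_def B'_def
  proof (intro allI)
    fix y z
    have "E j $ y $ z = ec j (R y z)" if jD: "j \<in> {..D}" for j using bmf_E[of j] jD unfolding bmf_def by simp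
    then show "(\<chi> y z. \<Sum>j\<le>D. a j * E j $ y $ z) $ y $ z = (\<Sum>j\<le>D. a j * ec j (R y z))"
      unfolding vec_lambda_beta by (intro sum.cong refl) simp
  qed
  moreover have "B *v ex = B' *v ex" unfolding B'_def lincomb_mv Bex ..
  ultimately have "B = B'" by (rule bm_inj[OF assms])
  then show ?thesis unfolding B'_def by blast
qed

end

definition smat :: "'a::comm_ring_1 \<Rightarrow> 'a^'n^'m \<Rightarrow> 'a^'n^'m" where
  "smat c M = (\<chi> y z. c * M $ y $ z)"

lemma smat_mv: "smat c M *v v = c *s (M *v v)"
  by (simp add: smat_def vec_eq_iff matrix_vector_mult_def sum_distrib_left mult.assoc)

lemma lincomb_closed:
  assumes add: "\<And>M N. M \<in> S \<Longrightarrow> N \<in> S \<Longrightarrow> M + N \<in> S"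
    and sc: "\<And>c M. M \<in> S \<Longrightarrow> smat c M \<in> S"
    and mem: "\<And>j. j \<le> (n::nat) \<Longrightarrow> M j \<in> S"
  shows "(\<chi> y z. \<Sum>j\<le>n. c j * M j $ y $ z) \<in> S"
  using mem
proof (induction n)
  case 0
  have "(\<chi> y z. \<Sum>j\<le>0. c j * M j $ y $ z) = smat (c 0) (M 0)" by (simp add: smat_def)
  then show ?case using sc 0 by simp
next
  case (Suc n)
  have "(\<chi> y z. \<Sum>j\<le>Suc n. c j * M j $ y $ z) =
        (\<chi> y z. \<Sum>j\<le>n. c j * M j $ y $ z) + smat (c (Suc n)) (M (Suc n))"
    by (simp add: smat_def vec_eq_iff)
  then show ?case using add sc Suc by simp
qed

context tw begin

inductive_set polyA :: "(complex^'x^'x) set" where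
  pI: "mat 1 \<in> polyA"
| pA: "M \<in> polyA \<Longrightarrow> A ** M \<in> polyA"
| padd: "M \<in> polyA \<Longrightarrow> N \<in> polyA \<Longrightarrow> M + N \<in> polyA"
| psc: "M \<in> polyA \<Longrightarrow> smat c M \<in> polyA"

definition pr :: "nat \<Rightarrow> 'x \<times> 'x" where "pr l = (SOME p. R (fst p) (snd p) = l)"
definition pn :: "nat \<Rightarrow> nat \<Rightarrow> nat \<Rightarrow> nat" where
  "pn i j l = card {w. R (fst (pr l)) w = i \<and> R w (snd (pr l)) = j}"

lemma pr: "l \<le> D \<Longrightarrow> R (fst (pr l)) (snd (pr l)) = l"
proof -
  assume "l \<le> D"
  then obtain y z where "R y z = l" using Rex by blast
  then have "R (fst (y, z)) (snd (y, z)) = l" by simp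
  then show ?thesis unfolding pr_def by (rule someI)
qed

lemma pn: "card {w. R y w = i \<and> R w z = j} = pn i j (R y z)"
  unfolding pn_def by (rule cnt) (rule pr[OF R_le, symmetric])

lemma adj_mult_entry: "(adj R i ** adj R j) $ y $ z = of_nat (pn i j (R y z))"
proof -
  have "(adj R i ** adj R j) $ y $ z = (\<Sum>w\<in>UNIV. if R y w = i \<and> R w z = j then 1 else 0)"
    by (simp add: matrix_matrix_mult_def adj_entry if_distrib cong: if_cong) (rule sum.cong, auto)
  also have "\<dots> = of_nat (card {w. R y w = i \<and> R w z = j})"
    by (simp add: sum.If_cases)
  finally show ?thesis using pn by simp
qed

lemma bmf_adj_mult: "bmf (adj R i ** adj R j) (\<lambda>l. of_nat (pn i j l))"
  unfolding bmf_def using adj_mult_entry by simp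

lemma pn_zero: assumes "l > Suc k" "l \<le> D" shows "pn 1 k l = 0"
proof -
  have "False" if "R (fst (pr l)) w = 1" "R w (snd (pr l)) = k" for w
    using tri[of "fst (pr l)" "snd (pr l)" w] pr[OF assms(2)] assms(1) that by simp
  then have "{w. R (fst (pr l)) w = 1 \<and> R w (snd (pr l)) = k} = {}" by blast
  then show ?thesis unfolding pn_def by (simp only: card.empty)
qed

lemma pn_nz: assumes "Suc k \<le> D" shows "pn 1 k (Suc k) \<noteq> 0"
proof -
  obtain y z where yz: "R y z = Suc k" using Rex assms by blast
  obtain w where "R y w = 1" "R w z = k" using step_down[OF yz] by blast
  then have "{w. R y w = 1 \<and> R w z = k} \<noteq> {}" by blast
  then have "card {w. R y w = 1 \<and> R w z = k} \<noteq> 0" by simp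
  then have "pn 1 k (R y z) \<noteq> 0" by (metis pn)
  then show ?thesis using yz by metis
qed

lemma polyA_lincomb: "(\<And>j. j \<le> (n::nat) \<Longrightarrow> M j \<in> polyA) \<Longrightarrow> (\<chi> y z. \<Sum>j\<le>n. c j * M j $ y $ z) \<in> polyA"
  by (rule lincomb_closed) (auto intro: padd psc)

lemma adj_polyA: "l \<le> D \<Longrightarrow> adj R l \<in> polyA"
proof (induction l rule: less_induct)
  case (less l)
  show ?case
  proof (cases l)
    case 0
    have "adj R 0 = mat 1" by (simp add: vec_eq_iff adj_entry mat_def R0)
    then show ?thesis using 0 pI by simp
  next
    case (Suc k)
    have kD: "k \<le> D" "Suc k \<le> D" using less.prems Suc by auto
    define p where "p = (of_nat (pn 1 k (Suc k)) :: complex)"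
    have p0: "p \<noteq> 0" using pn_nz[OF kD(2)] by (simp add: p_def)
    have prod: "A ** adj R k = (\<chi> y z. \<Sum>m\<le>D. of_nat (pn 1 k m) * adj R m $ y $ z)"
      using bmf_expand[OF bmf_adj_mult[of 1 k]] .
    define Q where "Q = (\<chi> y z. \<Sum>m\<le>k. (- of_nat (pn 1 k m)) * adj R m $ y $ z)"
    have "adj R (Suc k) = smat (1 / p) (A ** adj R k + Q)"
    proof -
      have spl: "(\<Sum>m\<le>D. of_nat (pn 1 k m) * adj R m $ y $ z) = 
            (\<Sum>m\<le>k. of_nat (pn 1 k m) * adj R m $ y $ z) + p * adj R (Suc k) $ y $ z" for y z
      proof -
        have split: "{..D} = {..k} \<union> {Suc k} \<union> {Suc (Suc k)..D}" using kD by auto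
        have "(\<Sum>m\<in>{Suc (Suc k)..D}. of_nat (pn 1 k m) * adj R m $ y $ z) = (0::complex)"
        proof (rule sum.neutral, rule ballI)
          fix m assume "m \<in> {Suc (Suc k)..D}"
          then have "pn 1 k m = 0" by (intro pn_zero) auto
          then show "of_nat (pn 1 k m) * adj R m $ y $ z = 0" by simp
        qed
        then show ?thesis unfolding split
          by (subst sum.union_disjoint, auto simp: p_def)+
      qed
      have e: "(A ** adj R k) $ y $ z = (\<Sum>m\<le>D. of_nat (pn 1 k m) * adj R m $ y $ z)" for y z
        unfolding prod by (simp only: vec_lambda_beta)
      have q: "Q $ y $ z = - (\<Sum>m\<le>k. of_nat (pn 1 k m) * adj R m $ y $ z)" for y z
        unfolding Q_def by (simp add: sum_negf)
      have "smat (1 / p) (A ** adj R k + Q) $ y $ z = adj R (Suc k) $ y $ z" for y z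
        unfolding smat_def vec_lambda_beta vector_add_component e q spl using p0 by (simp add: field_simps)
      then show ?thesis by (simp add: vec_eq_iff)
    qed
    moreover have "Q \<in> polyA" unfolding Q_def
      by (rule polyA_lincomb) (use less Suc in auto)
    moreover have "adj R k \<in> polyA" using less.IH[of k] Suc kD by simp
    then have "A ** adj R k \<in> polyA" by (rule pA)
    ultimately show ?thesis unfolding Suc by (metis padd psc)
  qed
qed

end

context tw begin

definition th :: "nat \<Rightarrow> complex" where
  "th = (SOME a. A = (\<chi> y z. \<Sum>j\<le>D. a j * E j $ y $ z))"

lemma A_spec: "A = (\<chi> y z. \<Sum>j\<le>D. th j * E j $ y $ z)"
proof -
  have "\<exists>a. A = (\<chi> y z. \<Sum>j\<le>D. a j * E j $ y $ z)" by (rule bm_span[OF bmf_adj])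
  then show ?thesis unfolding th_def by (rule someI_ex)
qed

lemma A_mv: "A *v v = (\<Sum>j\<le>D. th j *s (E j *v v))"
  by (subst A_spec) (rule lincomb_mv)

lemma A_E: assumes "j \<le> D" shows "A *v (E j *v v) = th j *s (E j *v v)"
proof -
  have "A *v (E j *v v) = (\<Sum>i\<le>D. th i *s (E i *v (E j *v v)))" by (rule A_mv)
  also have "\<dots> = (\<Sum>i\<le>D. if i = j then th j *s (E j *v v) else 0)"
    by (rule sum.cong) (auto simp: EE assms)
  also have "\<dots> = th j *s (E j *v v)" using assms by (simp add: sum.delta')
  finally show ?thesis .
qed

lemma A_E0: "j \<le> D \<Longrightarrow> adj R (Suc 0) *v (E j *v v) = th j *s (E j *v v)"
  using A_E by (simp only: One_nat_def[symmetric])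

definition Ap :: "nat \<Rightarrow> complex^'x \<Rightarrow> complex^'x" where
  "Ap k v = (((*v) A) ^^ k) v"

lemma Ap_0[simp]: "Ap 0 v = v" by (simp add: Ap_def)
lemma Ap_Suc: "Ap (Suc k) v = A *v Ap k v" by (simp add: Ap_def)

lemma Ap_spec: "Ap k v = (\<Sum>j\<le>D. th j ^ k *s (E j *v v))"
proof (induction k)
  case 0
  then show ?case using Esum_v by simp
next
  case (Suc k)
  have "Ap (Suc k) v = (\<Sum>j\<le>D. th j ^ k *s (A *v (E j *v v)))"
    by (simp add: Ap_Suc Suc vec.sum vec.scale)
  also have "\<dots> = (\<Sum>j\<le>D. th j ^ Suc k *s (E j *v v))"
    by (rule sum.cong) (auto simp: A_E A_E0 mult.commute)
  finally show ?case .
qed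

lemma polyA_eig: "M \<in> polyA \<Longrightarrow> \<exists>\<mu>. \<forall>j\<le>D. \<forall>w. M *v (E j *v w) = \<mu> (th j) *s (E j *v w)"
proof (induction rule: polyA.induct)
  case pI
  show ?case by (rule exI[of _ "\<lambda>_. 1"]) simp
next
  case (pA M)
  then obtain \<mu> where mu: "\<forall>j\<le>D. \<forall>w. M *v (E j *v w) = \<mu> (th j) *s (E j *v w)" by blast
  have "(A ** M) *v (E j *v w) = (th j * \<mu> (th j)) *s (E j *v w)" if "j \<le> D" for j w
    using that mu by (simp add: matrix_vector_mul_assoc[symmetric] vec.scale A_E A_E0)
  then show ?case by (intro exI[of _ "\<lambda>t. t * \<mu> t"]) auto
next
  case (padd M N)
  then obtain \<mu> \<nu> where mu: "\<forall>j\<le>D. \<forall>w. M *v (E j *v w) = \<mu> (th j) *s (E j *v w)"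
    and nu: "\<forall>j\<le>D. \<forall>w. N *v (E j *v w) = \<nu> (th j) *s (E j *v w)" by blast
  have "(M + N) *v (E j *v w) = (\<mu> (th j) + \<nu> (th j)) *s (E j *v w)" if "j \<le> D" for j w
    using that mu nu by (simp add: matrix_vector_mult_add_rdistrib vector_sadd_rdistrib)
  then show ?case by (intro exI[of _ "\<lambda>t. \<mu> t + \<nu> t"]) auto
next
  case (psc M c)
  then obtain \<mu> where mu: "\<forall>j\<le>D. \<forall>w. M *v (E j *v w) = \<mu> (th j) *s (E j *v w)" by blast
  have "smat c M *v (E j *v w) = (c * \<mu> (th j)) *s (E j *v w)" if "j \<le> D" for j w
    using that mu by (simp add: smat_mv)
  then show ?case by (intro exI[of _ "\<lambda>t. c * \<mu> t"]) auto
qed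

lemma E_polyA: assumes "j \<le> D" shows "E j \<in> polyA"
proof -
  have "E j = (\<chi> y z. \<Sum>l\<le>D. ec j l * adj R l $ y $ z)" by (rule bmf_expand[OF bmf_E[OF assms]])
  also have "\<dots> \<in> polyA" by (rule polyA_lincomb) (rule adj_polyA)
  finally show ?thesis .
qed

lemma E_has_nz: assumes "j \<le> D" shows "\<exists>w. E j *v w \<noteq> 0"
proof (rule ccontr)
  assume "\<not> (\<exists>w. E j *v w \<noteq> 0)"
  then have "E j = 0" by (intro mat_eq_mv) simp
  then show False using E_nz assms by blast
qed

lemma th_inj: "inj_on th {..D}"
proof (rule inj_onI)
  fix j m assume jm: "j \<in> {..D}" "m \<in> {..D}" "th j = th m"
  show "j = m"
  proof (rule ccontr)
    assume ne: "j \<noteq> m"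
    obtain \<mu> where mu: "\<forall>i\<le>D. \<forall>w. E j *v (E i *v w) = \<mu> (th i) *s (E i *v w)"
      using polyA_eig[OF E_polyA] jm by blast
    obtain w where w: "E j *v w \<noteq> 0" using E_has_nz jm by blast
    have "E j *v w = \<mu> (th j) *s (E j *v w)" using mu[rule_format, of j w] jm EE[of j j w] by simp
    then have "1 *s (E j *v w) = \<mu> (th j) *s (E j *v w)" by simp
    then have mu1: "\<mu> (th j) = 1" using w vec.scale_cancel_right[of 1 "E j *v w" "\<mu> (th j)"] by auto
    have "E m *v v = 0" for v
    proof -
      have "E j *v (E m *v v) = \<mu> (th m) *s (E m *v v)" using mu jm by simp
      then show ?thesis using EE[of j m v] jm ne mu1 jm(3) by simp
    qed
    then have "E m = 0" by (intro mat_eq_mv) simp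
    then show False using E_nz jm by blast
  qed
qed

lemma polyA_inv: assumes "M \<in> polyA" "vec.subspace K" "\<And>v. v \<in> K \<Longrightarrow> A *v v \<in> K" "v \<in> K"
  shows "M *v v \<in> K"
  using assms(1,4)
proof (induction arbitrary: v rule: polyA.induct)
  case pI then show ?case by simp
next
  case (pA M) then show ?case by (simp add: matrix_vector_mul_assoc[symmetric] assms(3) del: One_nat_def)
next
  case (padd M N) then show ?case by (simp add: matrix_vector_mult_add_rdistrib vec.subspace_add assms(2))
next
  case (psc M c) then show ?case by (simp add: smat_mv vec.subspace_scale assms(2))
qed

end

definition hf :: "complex^'n::finite \<Rightarrow> complex^'n \<Rightarrow> complex" where
  "hf v w = (\<Sum>y\<in>UNIV. cnj (v $ y) * w $ y)"

definition adjM :: "complex^'n::finite^'n \<Rightarrow> complex^'n^'n" where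
  "adjM F = (\<chi> i j. cnj (F $ j $ i))"

lemma hf_adj: "hf (F *v v) w = hf v (adjM F *v w)"
  unfolding hf_def adjM_def matrix_vector_mult_def
  by (simp add: sum_distrib_left sum_distrib_right mult_ac) (rule sum.swap)

lemma hf_scale_r: "hf v (a *s w) = a * hf v w"
  by (simp add: hf_def sum_distrib_left mult_ac)
lemma hf_scale_l: "hf (a *s v) w = cnj a * hf v w"
  by (simp add: hf_def sum_distrib_left mult_ac)
lemma hf_add_r: "hf v (w + u) = hf v w + hf v u"
  by (simp add: hf_def distrib_left sum.distrib)
lemma hf_add_l: "hf (v + u) w = hf v w + hf u w"
  by (simp add: hf_def distrib_right sum.distrib)
lemma hf_sum_r: "hf v (\<Sum>j\<in>S. f j) = (\<Sum>j\<in>S. hf v (f j))"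
  by (simp add: hf_def sum_component sum_distrib_left) (rule sum.swap)
lemma hf_zero_r[simp]: "hf v 0 = 0" by (simp add: hf_def)
lemma hf_zero_l[simp]: "hf 0 v = 0" by (simp add: hf_def)
lemma hf_cnj: "hf v w = cnj (hf w v)"
  by (simp add: hf_def mult.commute)
lemma hf_minus_r: "hf v (w - u) = hf v w - hf v u"
  by (simp add: hf_def right_diff_distrib sum_subtractf)

lemma inner_hf: "inner v w = Re (hf v w)"
  by (simp add: inner_vec_def hf_def inner_complex_def Re_sum)

lemma hf_self: "hf v v = 0 \<Longrightarrow> v = 0"
proof -
  assume "hf v v = 0"
  then have "inner v v = 0" by (simp add: inner_hf)
  then show "v = 0" by simp
qed

lemma scaleR_vec_c: "scaleR r (v::complex^'n) = complex_of_real r *s v"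
proof -
  have "(scaleR r v) $ i = (complex_of_real r *s v) $ i" for i
    unfolding vector_scaleR_component vector_smult_component by (rule scaleR_conv_of_real)
  then show ?thesis by (simp only: vec_eq_iff) blast
qed

lemma vec_subspace_real: "vec.subspace (W::(complex^'n) set) \<Longrightarrow> subspace W"
  unfolding subspace_def vec.subspace_def by (simp add: scaleR_vec_c)

lemma hf_decomp:
  fixes W :: "(complex^'n::finite) set"
  assumes "vec.subspace W"
  obtains y z where "y \<in> W" "\<And>w. w \<in> W \<Longrightarrow> hf w z = 0" "v = y + z"
proof -
  obtain y z where y: "y \<in> span W" and z: "\<And>w. w \<in> span W \<Longrightarrow> orthogonal z w" and v: "v = y + z"
    using orthogonal_subspace_decomp_exists[of W v] by blast
  have sW: "span W = W" using vec_subspace_real[OF assms] by simp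
  have "hf w z = 0" if w: "w \<in> W" for w
  proof -
    have "\<i> *s w \<in> W" using w assms by (rule vec.subspace_scale[rotated])
    then have "inner z (\<i> *s w) = 0" "inner z w = 0" using z sW w unfolding orthogonal_def by auto
    then have "Re (hf z w) = 0" "Re (\<i> * hf z w) = 0" by (simp_all add: inner_hf hf_scale_r)
    then have "hf z w = 0" by (simp add: complex_eq_iff)
    then show ?thesis by (subst hf_cnj) simp
  qed
  then show ?thesis using that y v sW by blast
qed

context tw begin

lemma TT_scale: "M \<in> TT \<Longrightarrow> smat c M \<in> TT"
  unfolding smat_def by (rule terwilliger.scale)

lemma TT_lincomb: "(\<And>j. j \<le> (n::nat) \<Longrightarrow> M j \<in> TT) \<Longrightarrow> (\<chi> y z. \<Sum>j\<le>n. c j * M j $ y $ z) \<in> TT"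
  by (rule lincomb_closed) (auto intro: terwilliger.add TT_scale)

lemma TT_zero: "0 \<in> TT"
proof -
  have "smat 0 (adj R 0) \<in> TT" by (intro TT_scale terwilliger.gen_A) simp
  moreover have "smat 0 (adj R 0) = (0::complex^'x^'x)" by (simp add: smat_def vec_eq_iff)
  ultimately show ?thesis by simp
qed

lemma adj_big: "l > D \<Longrightarrow> adj R l = 0"
  using R_le by (auto simp: vec_eq_iff adj_entry) (metis leD)

lemma adj_T: "adj R l \<in> TT"
  by (cases "l \<le> D") (auto intro: terwilliger.gen_A simp: adj_big TT_zero)

lemma E_T: "j \<le> D \<Longrightarrow> E j \<in> TT"
  by (subst bmf_expand[OF bmf_E], assumption, rule TT_lincomb, rule adj_T)

lemma card_nz: "of_nat CARD('x) \<noteq> (0::complex)" by simp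

lemma Es_T: "Es i \<in> TT"
proof (cases "i \<le> D")
  case False
  then have "Es i = 0" using adj_big by (simp add: Estar_def vec_eq_iff)
  then show ?thesis using TT_zero by simp
next
  case True
  obtain a where a: "adj R i = (\<chi> y z. \<Sum>j\<le>D. a j * E j $ y $ z)" using bm_span[OF bmf_adj] by blast
  have "Es i = (\<chi> y z. \<Sum>j\<le>D. (a j / of_nat CARD('x)) * Astar E j x $ y $ z)"
  proof -
    have "Es i $ y $ z = (\<Sum>j\<le>D. (a j / of_nat CARD('x)) * Astar E j x $ y $ z)" for y z
    proof (cases "y = z")
      case True
      have "Es i $ y $ z = (\<Sum>j\<le>D. a j * E j $ x $ y)"
        using True a[THEN arg_cong[where f="\<lambda>M. M $ x $ y"]] by (simp add: Estar_def)
      also have "\<dots> = (\<Sum>j\<le>D. (a j / of_nat CARD('x)) * Astar E j x $ y $ z)"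
        using True card_nz by (intro sum.cong refl) (simp add: Astar_def)
      finally show ?thesis .
    next
      case False
      then show ?thesis by (simp add: Estar_def Astar_def)
    qed
    then show ?thesis by (simp add: vec_eq_iff)
  qed
  also have "\<dots> \<in> TT" by (rule TT_lincomb) (rule terwilliger.gen_Astar)
  finally show ?thesis .
qed

lemma Astar_Es: assumes "l \<le> D"
  shows "Astar E l x = (\<chi> y z. \<Sum>i\<le>D. (of_nat CARD('x) * ec l i) * Es i $ y $ z)"
proof -
  have "Astar E l x $ y $ z = (\<Sum>i\<le>D. (of_nat CARD('x) * ec l i) * Es i $ y $ z)" for y z
  proof (cases "y = z")
    case True
    have "Astar E l x $ y $ z = of_nat CARD('x) * ec l (R x y)"
      using True bmf_E[OF assms] by (simp add: Astar_def bmf_def)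
    also have "\<dots> = (\<Sum>i\<le>D. (of_nat CARD('x) * ec l i) * Es i $ y $ z)"
    proof -
      have "Es i $ y $ z = (if R x y = i then 1 else 0)" for i using True by (simp add: Estar_def adj_entry)
      then have "(\<Sum>i\<le>D. (of_nat CARD('x) * ec l i) * Es i $ y $ z) =
          (\<Sum>i\<le>D. (of_nat CARD('x) * ec l i) * (if R x y = i then 1 else 0))" by simp
      also have "\<dots> = of_nat CARD('x) * ec l (R x y)" by (rule sum_ind[OF R_le])
      finally show ?thesis by simp
    qed
    finally show ?thesis .
  qed (simp add: Estar_def Astar_def)
  then show ?thesis by (simp add: vec_eq_iff)
qed

lemma TT_sub:
  assumes hadd: "\<And>M N. M \<in> S \<Longrightarrow> N \<in> S \<Longrightarrow> M + N \<in> S"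
    and hsc: "\<And>c M. M \<in> S \<Longrightarrow> smat c M \<in> S"
    and hmul: "\<And>M N. M \<in> S \<Longrightarrow> N \<in> S \<Longrightarrow> M ** N \<in> S"
    and gA: "\<And>l. l \<le> D \<Longrightarrow> adj R l \<in> S"
    and gE: "\<And>i. i \<le> D \<Longrightarrow> Es i \<in> S"
    and F: "F \<in> TT"
  shows "F \<in> S"
  using F
proof (induction rule: terwilliger.induct)
  case (gen_A i) then show ?case by (rule gA)
next
  case (gen_Astar i)
  then show ?case by (subst Astar_Es, assumption, intro lincomb_closed[OF hadd hsc] gE)
next
  case (add A B) then show ?case by (blast intro: hadd)
next
  case (scale A c) then show ?case using hsc unfolding smat_def by blast
next
  case (mult A B) then show ?case by (blast intro: hmul)
qed

lemma adjM_T: "F \<in> TT \<Longrightarrow> adjM F \<in> TT"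
proof (rule TT_sub[where S="{F. adjM F \<in> TT}", simplified])
  show "adjM (M + N) \<in> TT" if "adjM M \<in> TT" "adjM N \<in> TT" for M N
  proof -
    have "adjM (M + N) = adjM M + adjM N" by (simp add: adjM_def vec_eq_iff)
    then show ?thesis using that terwilliger.add by simp
  qed
  show "adjM (smat c M) \<in> TT" if "adjM M \<in> TT" for c M
  proof -
    have "adjM (smat c M) = smat (cnj c) (adjM M)" by (simp add: adjM_def smat_def vec_eq_iff)
    then show ?thesis using that TT_scale by simp
  qed
  show "adjM (M ** N) \<in> TT" if "adjM M \<in> TT" "adjM N \<in> TT" for M N
  proof -
    have "adjM (M ** N) = adjM N ** adjM M"
      by (simp add: adjM_def vec_eq_iff matrix_matrix_mult_def mult.commute)
    then show ?thesis using that terwilliger.mult by simp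
  qed
  show "adjM (adj R l) \<in> TT" for l
  proof -
    have "adjM (adj R l) = adj R l" by (simp add: adjM_def vec_eq_iff adj_entry Rsym)
    then show ?thesis using adj_T by simp
  qed
  show "adjM (Es i) \<in> TT" for i
  proof -
    have "adjM (Es i) = Es i" by (simp add: adjM_def vec_eq_iff Estar_def adj_entry)
    then show ?thesis using Es_T by simp
  qed
qed

end

lemma mvspan:
  assumes "v \<in> vec.span S" "vec.subspace U" "\<And>s. s \<in> S \<Longrightarrow> (M::'a::field^'n^'m) *v s \<in> U"
  shows "M *v v \<in> U"
proof -
  have "M *v v \<in> (*v) M ` vec.span S" using assms(1) by blast
  also have "\<dots> = vec.span ((*v) M ` S)" by (rule vec.span_image[symmetric])
  also have "\<dots> \<subseteq> U" using assms(2,3) by (intro vec.span_minimal) auto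
  finally show ?thesis .
qed

context tw begin

lemma Es_mv: "(Es i *v v) $ y = (if R x y = i then v $ y else 0)"
proof -
  have "(Es i *v v) $ y = (\<Sum>z\<in>UNIV. (if y = z then adj R i $ x $ y else 0) * v $ z)"
    by (simp add: matrix_vector_mult_def Estar_def)
  also have "\<dots> = (\<Sum>z\<in>UNIV. if z = y then adj R i $ x $ y * v $ y else 0)"
    by (rule sum.cong) auto
  also have "\<dots> = adj R i $ x $ y * v $ y" by simp
  finally show ?thesis by (simp add: adj_entry)
qed

lemma Es_Es: "Es i *v (Es j *v v) = (if i = j then Es i *v v else 0)"
  by (simp add: vec_eq_iff Es_mv)

lemma Es_sum: "(\<Sum>i\<le>D. Es i *v v) = v"
proof -
  have "(\<Sum>i\<le>D. Es i *v v) $ y = v $ y" for y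
  proof -
    have "(\<Sum>i\<le>D. Es i *v v) $ y = (\<Sum>i\<le>D. if i = R x y then v $ y else 0)"
      unfolding sum_component Es_mv by (rule sum.cong) auto
    also have "\<dots> = v $ y" using R_le[of x y] by (simp add: sum.delta')
    finally show ?thesis .
  qed
  then show ?thesis by (simp add: vec_eq_iff)
qed

lemma Es_big: "D < i \<Longrightarrow> Es i *v v = 0"
  using R_le[of x] by (auto simp: vec_eq_iff Es_mv) (metis leD)

definition supp_le :: "nat \<Rightarrow> complex^'x \<Rightarrow> bool" where
  "supp_le s v \<longleftrightarrow> (\<forall>y. s < R x y \<longrightarrow> v $ y = 0)"

lemma A_supp: assumes "supp_le s v" shows "supp_le (Suc s) (A *v v)"
  unfolding supp_le_def
proof (intro allI impI)
  fix y assume y: "Suc s < R x y"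
  have "(A *v v) $ y = (\<Sum>w\<in>UNIV. (if R y w = 1 then 1 else 0) * v $ w)"
    by (simp add: matrix_vector_mult_def adj_entry del: One_nat_def)
  also have "\<dots> = 0"
  proof (rule sum.neutral, rule ballI)
    fix w
    show "(if R y w = 1 then 1 else 0) * v $ w = 0"
    proof (cases "R y w = 1")
      case True
      have "R x y \<le> R x w + R w y" by (rule tri)
      then have "s < R x w" using True y Rsym[of w y] by simp
      then show ?thesis using assms unfolding supp_le_def by simp
    qed simp
  qed
  finally show "(A *v v) $ y = 0" .
qed

lemma supp_Es: "supp_le s v \<Longrightarrow> s < i \<Longrightarrow> Es i *v v = 0"
  unfolding supp_le_def by (auto simp: vec_eq_iff Es_mv)

lemma Es_supp: "Es r *v v = v \<Longrightarrow> supp_le r v"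
  unfolding supp_le_def by (metis Es_mv less_irrefl vec_eq_iff)

lemma Ap_supp: "supp_le r w \<Longrightarrow> supp_le (r + k) (Ap k w)"
  by (induction k) (auto simp: Ap_Suc intro: A_supp[of "r + k" for k, simplified])

lemma mod_sub: "is_module TT W \<Longrightarrow> vec.subspace W" unfolding is_module_def by blast
lemma mod_inv: "is_module TT W \<Longrightarrow> F \<in> TT \<Longrightarrow> w \<in> W \<Longrightarrow> F *v w \<in> W" unfolding is_module_def by blast
lemma Ap_mod: "is_module TT W \<Longrightarrow> w \<in> W \<Longrightarrow> Ap k w \<in> W"
  by (induction k) (auto simp: Ap_Suc intro: mod_inv adj_T)

lemma one_dim:
  assumes Wm: "is_module TT W" and thinW: "vec.dim ((\<lambda>w. Es i *v w) ` W) \<le> 1"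
    and v: "v \<in> W" "Es i *v v \<noteq> 0" and u: "u \<in> W"
  shows "Es i *v u \<in> vec.span {Es i *v v}"
proof -
  have "(\<lambda>w. Es i *v w) ` W \<subseteq> vec.span {Es i *v v}"
  proof (rule vec.card_ge_dim_independent)
    show "{Es i *v v} \<subseteq> (\<lambda>w. Es i *v w) ` W" using v by blast
    show "vec.independent {Es i *v v}"
      using v(2) by (intro vec.independent_insertI) (auto simp: vec.independent_empty)
    show "vec.dim ((\<lambda>w. Es i *v w) ` W) \<le> card {Es i *v v}" using thinW by simp
  qed
  then show ?thesis using u by blast
qed

lemma thin_span:
  assumes Wm: "is_module TT W" and irr: "irreducible_module TT W"
    and thinW: "\<And>i. vec.dim ((\<lambda>w. Es i *v w) ` W) \<le> 1"
    and below: "\<And>i w. i < r \<Longrightarrow> w \<in> W \<Longrightarrow> Es i *v w = 0"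
    and w0W: "w0 \<in> W" and w0r: "Es r *v w0 = w0" and w0nz: "w0 \<noteq> 0"
  shows "W = vec.span (range (\<lambda>k. Ap k w0))"
proof -
  have sW: "vec.subspace W" using Wm by (rule mod_sub)
  have ApW: "Ap k w0 \<in> W" for k using Ap_mod[OF Wm w0W] .
  define Kk where "Kk k = vec.span ((\<lambda>j. Ap j w0) ` {..k})" for k
  have Kk_sub: "vec.subspace (Kk k)" for k unfolding Kk_def by simp
  have Kk_mono: "j \<le> k \<Longrightarrow> Kk j \<subseteq> Kk k" for j k
    unfolding Kk_def by (intro vec.span_mono image_mono) auto
  have Ap_Kk: "j \<le> k \<Longrightarrow> Ap j w0 \<in> Kk k" for j k
    unfolding Kk_def by (intro vec.span_base) auto
  have supp: "supp_le (r + k) (Ap k w0)" for k using Ap_supp[OF Es_supp[OF w0r]] .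
  have hi: "r + k < i \<Longrightarrow> Es i *v Ap k w0 = 0" for i k using supp_Es[OF supp] .
  have lo: "i < r \<Longrightarrow> Es i *v Ap k w0 = 0" for i k using below ApW by blast
  have od: "Es i *v u \<in> vec.span {Es i *v v}" if "v \<in> W" "Es i *v v \<noteq> 0" "u \<in> W" for i u v
    using one_dim[OF Wm thinW that] .
  have claim: "\<forall>i. Es i *v Ap k w0 \<in> Kk k" for k
  proof (induction k rule: less_induct)
    case (less k)
    define vk where "vk j = Es (r + j) *v Ap j w0" for j
    have vkK: "vk j \<in> Kk j" if "j < k" for j using less.IH[OF that] unfolding vk_def by blast
    have mid: "Es i *v Ap l w0 \<in> Kk k" if "r \<le> i" "i - r < k" "vk (i - r) \<noteq> 0" for i l
    proof -
      have ii: "r + (i - r) = i" using that by simp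
      have "Es i *v Ap l w0 \<in> vec.span {vk (i - r)}"
        using od[of "Ap (i - r) w0" i "Ap l w0"] ApW that(3) unfolding vk_def ii by blast
      moreover have "vec.span {vk (i - r)} \<subseteq> Kk k"
        using vkK[OF that(2)] Kk_mono[of "i - r" k] that(2) Kk_sub
        by (intro vec.span_minimal) auto
      ultimately show ?thesis by blast
    qed
    show ?case
    proof (cases "\<exists>j\<le>k. vk j = 0")
      case True
      define j0 where "j0 = (LEAST j. vk j = 0)"
      have j0: "vk j0 = 0" using True unfolding j0_def by (metis (mono_tags, lifting) LeastI)
      have j0k: "j0 \<le> k" using True unfolding j0_def by (meson Least_le le_trans)
      have lt: "vk j \<noteq> 0" if "j < j0" for j using that unfolding j0_def by (rule not_less_Least)
      have "vk 0 = w0" unfolding vk_def using w0r by simp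
      then have "j0 \<noteq> 0" using j0 w0nz by metis
      then obtain m where m: "j0 = Suc m" by (cases j0) auto
      have step: "Ap j0 w0 \<in> Kk m"
      proof -
        have comp: "Es i *v Ap j0 w0 \<in> Kk m" for i
        proof -
          consider "i < r" | "r \<le> i" "i < r + j0" | "i = r + j0" | "r + j0 < i" by linarith
          then show ?thesis
          proof cases
            case 1 then show ?thesis using lo vec.subspace_0[OF Kk_sub] by simp
          next
            case 2
            have ii: "r + (i - r) = i" using 2 by simp
            have a: "Es i *v Ap j0 w0 \<in> vec.span {vk (i - r)}"
              using od[of "Ap (i - r) w0" i "Ap j0 w0"] ApW lt[of "i - r"] 2 unfolding vk_def ii by auto
            have "vk (i - r) \<in> Kk (i - r)" using vkK[of "i - r"] 2 j0k by simp
            moreover have "i - r \<le> m" using 2 m by simp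
            ultimately have "vk (i - r) \<in> Kk m" using Kk_mono[of "i - r" m] by blast
            then have "vec.span {vk (i - r)} \<subseteq> Kk m" using Kk_sub by (intro vec.span_minimal) auto
            then show ?thesis using a by blast
          next
            case 3 then show ?thesis using j0 vec.subspace_0[OF Kk_sub] unfolding vk_def by simp
          next
            case 4 then show ?thesis using hi vec.subspace_0[OF Kk_sub] by simp
          qed
        qed
        have "Ap j0 w0 = (\<Sum>i\<le>D. Es i *v Ap j0 w0)" by (rule Es_sum[symmetric])
        also have "\<dots> \<in> Kk m" using comp by (intro vec.subspace_sum Kk_sub) auto
        finally show ?thesis .
      qed
      have Ainv: "A *v v \<in> Kk m" if vK: "v \<in> Kk m" for v
      proof -
        have "A *v s \<in> Kk m" if "s \<in> (\<lambda>j. Ap j w0) ` {..m}" for s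
        proof -
          obtain j where j: "j \<le> m" "s = Ap j w0" using \<open>s \<in> _\<close> by blast
          show ?thesis
          proof (cases "Suc j \<le> m")
            case True then show ?thesis using Ap_Kk[of "Suc j" m] j by (simp add: Ap_Suc)
          next
            case False then have "Suc j = j0" using j m by simp
            then show ?thesis using step j by (simp add: Ap_Suc[symmetric] del: One_nat_def)
          qed
        qed
        then show ?thesis using mvspan[of v "(\<lambda>j. Ap j w0) ` {..m}" "Kk m" A] vK Kk_sub
          unfolding Kk_def by blast
      qed
      have all: "Ap l w0 \<in> Kk m" for l
        by (induct l) (simp_all add: Ap_Kk[of 0 m, simplified] Ap_Suc Ainv del: One_nat_def)
      show "\<forall>i. Es i *v Ap k w0 \<in> Kk k"
      proof
        fix i
        show "Es i *v Ap k w0 \<in> Kk k"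
        proof -
          have "Es i *v s \<in> Kk k" if "s \<in> (\<lambda>j. Ap j w0) ` {..m}" for s
          proof -
            obtain j where j: "j \<le> m" "s = Ap j w0" using \<open>s \<in> _\<close> by blast
            then have "j < k" using m j0k by simp
            then have "Es i *v s \<in> Kk j" using less.IH j by blast
            then show "Es i *v s \<in> Kk k" using Kk_mono[of j k] \<open>j < k\<close> by auto
          qed
          then show ?thesis using mvspan[of "Ap k w0" "(\<lambda>j. Ap j w0) ` {..m}" "Kk k" "Es i"] all[of k] Kk_sub
            unfolding Kk_def by blast
        qed
      qed
    next
      case False
      have ne: "Es i *v Ap k w0 \<in> Kk k" if inr: "i \<noteq> r + k" for i
      proof -
        consider "i < r" | "r \<le> i" "i < r + k" | "r + k < i" using inr by linarith
        then show ?thesis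
        proof cases
          case 1 then show ?thesis using lo vec.subspace_0[OF Kk_sub] by simp
        next
          case 2 then show ?thesis using mid False by auto
        next
          case 3 then show ?thesis using hi vec.subspace_0[OF Kk_sub] by simp
        qed
      qed
      have "Es (r + k) *v Ap k w0 \<in> Kk k"
      proof (cases "r + k \<le> D")
        case True
        have "Ap k w0 = (\<Sum>i\<le>D. Es i *v Ap k w0)" by (rule Es_sum[symmetric])
        also have "\<dots> = Es (r + k) *v Ap k w0 + (\<Sum>i\<in>{..D} - {r + k}. Es i *v Ap k w0)"
          using True by (subst sum.remove[of _ "r + k"]) auto
        finally have "Es (r + k) *v Ap k w0 = Ap k w0 - (\<Sum>i\<in>{..D} - {r + k}. Es i *v Ap k w0)"
          by (simp add: algebra_simps)
        also have "\<dots> \<in> Kk k"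
          using ne Ap_Kk[of k k] by (intro vec.subspace_diff Kk_sub vec.subspace_sum) auto
        finally show ?thesis .
      next
        case False
        then show ?thesis using Es_big vec.subspace_0[OF Kk_sub] by simp
      qed
      then show "\<forall>i. Es i *v Ap k w0 \<in> Kk k" using ne by metis
    qed
  qed
  define K where "K = vec.span (range (\<lambda>k. Ap k w0))"
  have K_sub: "vec.subspace K" unfolding K_def by simp
  have KkK: "Kk k \<subseteq> K" for k unfolding Kk_def K_def by (intro vec.span_mono) auto
  have EsK: "Es i *v v \<in> K" if vK: "v \<in> K" for i v
  proof -
    have "Es i *v s \<in> K" if "s \<in> range (\<lambda>k. Ap k w0)" for s
    proof -
      obtain k where "s = Ap k w0" using \<open>s \<in> _\<close> by blast
      then show ?thesis using claim[of k] KkK[of k] by blast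
    qed
    then show ?thesis using mvspan[of v "range (\<lambda>k. Ap k w0)" K "Es i"] vK K_sub unfolding K_def by blast
  qed
  have AK: "A *v v \<in> K" if vK: "v \<in> K" for v
  proof -
    have "A *v s \<in> K" if "s \<in> range (\<lambda>k. Ap k w0)" for s
    proof -
      obtain k where "s = Ap k w0" using \<open>s \<in> _\<close> by blast
      then have "A *v s = Ap (Suc k) w0" by (simp add: Ap_Suc del: One_nat_def)
      then show ?thesis unfolding K_def by (simp add: vec.span_base del: One_nat_def)
    qed
    then show ?thesis using mvspan[of v "range (\<lambda>k. Ap k w0)" K A] vK K_sub unfolding K_def by blast
  qed
  have TK: "F *v v \<in> K" if F: "F \<in> TT" and v: "v \<in> K" for F v
  proof -
    have "F \<in> {F. \<forall>v\<in>K. F *v v \<in> K}"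
    proof (rule TT_sub[OF _ _ _ _ _ F])
      show "M + N \<in> {F. \<forall>v\<in>K. F *v v \<in> K}" if "M \<in> {F. \<forall>v\<in>K. F *v v \<in> K}" "N \<in> {F. \<forall>v\<in>K. F *v v \<in> K}" for M N
        using that by (simp add: matrix_vector_mult_add_rdistrib vec.subspace_add[OF K_sub])
      show "smat c M \<in> {F. \<forall>v\<in>K. F *v v \<in> K}" if "M \<in> {F. \<forall>v\<in>K. F *v v \<in> K}" for c M
        using that by (simp add: smat_mv vec.subspace_scale[OF K_sub])
      show "M ** N \<in> {F. \<forall>v\<in>K. F *v v \<in> K}" if "M \<in> {F. \<forall>v\<in>K. F *v v \<in> K}" "N \<in> {F. \<forall>v\<in>K. F *v v \<in> K}" for M N
        using that by (simp add: matrix_vector_mul_assoc[symmetric])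
      show "adj R l \<in> {F. \<forall>v\<in>K. F *v v \<in> K}" if "l \<le> D" for l
        using polyA_inv[OF adj_polyA[OF that] K_sub AK] by blast
      show "Es i \<in> {F. \<forall>v\<in>K. F *v v \<in> K}" if "i \<le> D" for i
        using EsK by blast
    qed
    then show ?thesis using v by blast
  qed
  have modK: "is_module TT K" unfolding is_module_def using K_sub TK by blast
  have KW: "K \<subseteq> W" unfolding K_def using ApW sW by (intro vec.span_minimal) auto
  have "w0 \<in> K" unfolding K_def using vec.span_base[of w0 "range (\<lambda>k. Ap k w0)"] Ap_0 by (metis rangeI)
  then have "K \<noteq> {0}" using w0nz by blast
  then have "K = W" using irr modK KW unfolding irreducible_module_def by blast
  then show ?thesis unfolding K_def by simp
qed

end

lemma vandermonde_zero:
  fixes th c :: "nat \<Rightarrow> complex"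
  assumes fin: "finite S" and inj: "inj_on th S"
    and h: "\<And>k. k < card S \<Longrightarrow> (\<Sum>j\<in>S. th j ^ k * c j) = 0"
    and j0: "j0 \<in> S"
  shows "c j0 = 0"
proof -
  define p where "p = (\<Prod>j\<in>S - {j0}. [:- th j, 1:])"
  have "degree p \<le> sum (degree \<circ> (\<lambda>j. [:- th j, 1:])) (S - {j0})"
    unfolding p_def by (rule degree_prod_sum_le) (use fin in simp)
  also have "\<dots> = card (S - {j0})" by simp
  also have "\<dots> < card S" using fin j0 by (rule card_Diff1_less)
  finally have dp: "degree p < card S" .
  have "(\<Sum>j\<in>S. poly p (th j) * c j) = (\<Sum>j\<in>S. \<Sum>i\<le>degree p. coeff p i * th j ^ i * c j)"
    by (simp add: poly_altdef sum_distrib_right)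
  also have "\<dots> = (\<Sum>i\<le>degree p. coeff p i * (\<Sum>j\<in>S. th j ^ i * c j))"
    by (subst sum.swap) (simp add: sum_distrib_left mult.assoc)
  also have "\<dots> = 0" using h dp by (intro sum.neutral) auto
  finally have s0: "(\<Sum>j\<in>S. poly p (th j) * c j) = 0" .
  have pz: "poly p (th j) = 0" if "j \<in> S - {j0}" for j
    unfolding p_def poly_prod using fin that by (intro prod_zero) auto
  have "(\<Sum>j\<in>S. poly p (th j) * c j) = poly p (th j0) * c j0 + (\<Sum>j\<in>S - {j0}. poly p (th j) * c j)"
    using fin j0 by (simp add: sum.remove)
  also have "(\<Sum>j\<in>S - {j0}. poly p (th j) * c j) = 0" using pz by (intro sum.neutral) auto
  finally have "poly p (th j0) * c j0 = 0" using s0 by simp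
  moreover have "poly p (th j0) \<noteq> 0"
  proof -
    have "th j0 - th j \<noteq> 0" if "j \<in> S - {j0}" for j
      using inj j0 that by (auto simp: inj_on_def)
    then show ?thesis unfolding p_def poly_prod using fin by (subst prod_zero_iff) auto
  qed
  ultimately show ?thesis by simp
qed

context tw begin

lemma ex_entry: "ex $ y = (if y = x then 1 else 0)" by (simp add: axis_def)

lemma adj0: "adj R 0 = mat 1" by (simp add: vec_eq_iff adj_entry mat_def R0)

lemma colA_entry: "colA l $ y = (if R y x = l then 1 else 0)"
  by (simp add: colA_def mv_axis adj_entry)

lemma Es_colA: "Es i *v colA m = (if i = m then colA m else 0)"
  by (auto simp: vec_eq_iff Es_mv colA_entry Rsym)

definition PP where "PP = vec.span (colA ` {..D})"

lemma PP_sub: "vec.subspace PP" unfolding PP_def by simp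

lemma colA_PP: "m \<le> D \<Longrightarrow> colA m \<in> PP" unfolding PP_def by (intro vec.span_base) auto

lemma adj_colA: "adj R l *v colA m \<in> PP"
proof -
  have "adj R l *v colA m = (adj R l ** adj R m) *v ex" by (simp add: colA_def matrix_vector_mul_assoc)
  also have "\<dots> = (\<Sum>i\<le>D. of_nat (pn l m i) *s colA i)" by (simp add: bmf_mv[OF bmf_adj_mult] colA_def)
  also have "\<dots> \<in> PP" using colA_PP by (intro vec.subspace_sum PP_sub vec.subspace_scale) auto
  finally show ?thesis .
qed

lemma PP_inv: assumes F: "F \<in> TT" and v: "v \<in> PP" shows "F *v v \<in> PP"
proof -
  let ?S = "{F. \<forall>v\<in>PP. F *v v \<in> PP}"
  have "F \<in> ?S"
  proof (rule TT_sub[OF _ _ _ _ _ F])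
    show "M + N \<in> ?S" if "M \<in> ?S" "N \<in> ?S" for M N
      using that by (simp add: matrix_vector_mult_add_rdistrib vec.subspace_add[OF PP_sub])
    show "smat c M \<in> ?S" if "M \<in> ?S" for c M
      using that by (simp add: smat_mv vec.subspace_scale[OF PP_sub])
    show "M ** N \<in> ?S" if "M \<in> ?S" "N \<in> ?S" for M N
      using that by (simp add: matrix_vector_mul_assoc[symmetric])
    show "adj R l \<in> ?S" if "l \<le> D" for l
    proof -
      have "adj R l *v v \<in> PP" if "v \<in> PP" for v
        using mvspan[of v "colA ` {..D}" PP "adj R l"] that adj_colA PP_sub unfolding PP_def by blast
      then show ?thesis by blast
    qed
    show "Es i \<in> ?S" if "i \<le> D" for i
    proof -
      have *: "Es i *v s \<in> PP" if "s \<in> colA ` {..D}" for s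
        using that colA_PP vec.subspace_0[OF PP_sub] by (auto simp: Es_colA)
      have "Es i *v v \<in> PP" if "v \<in> PP" for v
        using mvspan[of v "colA ` {..D}" PP "Es i"] that PP_sub * unfolding PP_def by blast
      then show ?thesis by blast
    qed
  qed
  then show ?thesis using v by blast
qed

lemma Es_PP: assumes "v \<in> PP" shows "Es i *v v \<in> vec.span {colA i}"
proof -
  have "Es i *v s \<in> vec.span {colA i}" if "s \<in> colA ` {..D}" for s
    using that by (auto simp: Es_colA vec.span_base vec.span_zero)
  then show ?thesis using mvspan[of v "colA ` {..D}" "vec.span {colA i}" "Es i"] assms
    unfolding PP_def by simp
qed

lemma ex_PP: "ex \<in> PP"
proof -
  have "colA 0 = ex" by (simp add: colA_def adj0)
  then show ?thesis using colA_PP[of 0] by simp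
qed

lemma hf_ex: "hf ex w = w $ x"
proof -
  have "hf ex w = (\<Sum>y\<in>UNIV. if y = x then w $ y else 0)" unfolding hf_def by (intro sum.cong) (auto simp: ex_entry)
  then show ?thesis by simp
qed

lemma adjM_adjM: "adjM (adjM F) = F" by (simp add: adjM_def vec_eq_iff)

lemma hf_adj': "hf v (F *v w) = hf (adjM F *v v) w"
  using hf_adj[of "adjM F" v w] by (simp add: adjM_adjM)

lemma adjM_A: "adjM A = A" by (simp add: adjM_def vec_eq_iff adj_entry Rsym)

lemma Ap_comm: "Ap k (A *v v) = A *v Ap k v"
  by (induction k) (simp_all add: Ap_Suc del: One_nat_def)

lemma hf_Ap: "hf (Ap k v) w = hf v (Ap k w)"
proof (induction k arbitrary: w)
  case 0 then show ?case by simp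
next
  case (Suc k)
  have "hf (Ap (Suc k) v) w = hf (Ap k v) (A *v w)"
    unfolding Ap_Suc hf_adj adjM_A ..
  also have "\<dots> = hf v (Ap k (A *v w))" by (rule Suc)
  also have "\<dots> = hf v (Ap (Suc k) w)" by (simp add: Ap_comm Ap_Suc del: One_nat_def)
  finally show ?case .
qed

lemma hf_span_zero: assumes "v \<in> vec.span S" "\<And>s. s \<in> S \<Longrightarrow> hf s u = 0" shows "hf v u = 0"
proof -
  have "vec.subspace {v. hf v u = 0}"
    unfolding vec.subspace_def by (simp add: hf_add_l hf_scale_l)
  then have "vec.span S \<subseteq> {v. hf v u = 0}" using assms(2) by (intro vec.span_minimal) auto
  then show ?thesis using assms(1) by blast
qed

end

context tw begin

lemma dimlt: assumes "vec.subspace V" "vec.subspace W" "V \<subseteq> W" "V \<noteq> W"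
  shows "vec.dim V < vec.dim W"
proof -
  have eV: "vec.span V = V" using assms(1) by (rule vec.span_eq_iff[THEN iffD2])
  have eW: "vec.span W = W" using assms(2) by (rule vec.span_eq_iff[THEN iffD2])
  have "vec.span V \<subset> vec.span W" unfolding eV eW using assms(3,4) by blast
  then show ?thesis by (rule vec.dim_psubset)
qed

lemma main:
  fixes cv :: "complex^'x" and t :: nat
  assumes t: "1 \<le> t" "t \<le> D"
    and bound: "\<And>W. irreducible_module TT W \<Longrightarrow>
                  1 \<le> endpoint R x W \<Longrightarrow> endpoint R x W \<le> t \<Longrightarrow>
                  int (card {j \<in> dual_support D E W. E j *v cv \<noteq> 0})
                    \<le> int (delta R x cv) - int (endpoint R x W)"
    and thinh: "\<And>W. irreducible_module TT W \<Longrightarrow> endpoint R x W \<le> t \<Longrightarrow> thin R x W"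
  shows "\<forall>F \<in> TT. rel_codesign R t x (F *v cv)"
proof -
  obtain p c' where p: "p \<in> PP" and c'P: "\<And>q. q \<in> PP \<Longrightarrow> hf q c' = 0" and cv: "cv = p + c'"
    using hf_decomp[OF PP_sub, of cv] by blast
  define N0 where "N0 = {F *v c' | F. F \<in> TT}"
  have N0m: "is_module TT N0"
    unfolding is_module_def vec.subspace_def
  proof (intro conjI ballI allI impI)
    show "0 \<in> N0" unfolding N0_def using TT_zero by force
    show "v + w \<in> N0" if H: "v \<in> N0" "w \<in> N0" for v w
    proof -
      obtain F G where "F \<in> TT" "G \<in> TT" "v = F *v c'" "w = G *v c'" using H unfolding N0_def by blast
      then show ?thesis unfolding N0_def
        by (intro CollectI exI[of _ "F + G"]) (auto simp: matrix_vector_mult_add_rdistrib intro: terwilliger.add)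
    qed
    show "c *s v \<in> N0" if H: "v \<in> N0" for c v
    proof -
      obtain F where "F \<in> TT" "v = F *v c'" using H unfolding N0_def by blast
      then show ?thesis unfolding N0_def
        by (intro CollectI exI[of _ "smat c F"]) (auto simp: smat_mv intro: TT_scale)
    qed
    show "G *v v \<in> N0" if H: "G \<in> TT" "v \<in> N0" for G v
    proof -
      obtain F where "F \<in> TT" "v = F *v c'" using H unfolding N0_def by blast
      then show ?thesis unfolding N0_def using H
        by (intro CollectI exI[of _ "G ** F"]) (auto simp: matrix_vector_mul_assoc intro: terwilliger.mult)
    qed
  qed
  have N0P: "hf q n = 0" if H: "q \<in> PP" "n \<in> N0" for q n
  proof -
    obtain F where F: "F \<in> TT" "n = F *v c'" using H unfolding N0_def by blast
    have "hf q n = hf (adjM F *v q) c'" unfolding F(2) by (rule hf_adj')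
    also have "\<dots> = 0" using c'P PP_inv[OF adjM_T[OF F(1)] H(1)] by blast
    finally show ?thesis .
  qed
  define good where "good U \<longleftrightarrow> is_module TT U \<and> U \<subseteq> N0 \<and> (\<exists>i. 1 \<le> i \<and> i \<le> t \<and> (\<exists>v\<in>U. Es i *v v \<noteq> 0))"
    for U
  have key: "\<forall>F\<in>TT. \<forall>i. 1 \<le> i \<and> i \<le> t \<longrightarrow> Es i *v (F *v c') = 0"
  proof (rule ccontr)
    assume "\<not> (\<forall>F\<in>TT. \<forall>i. 1 \<le> i \<and> i \<le> t \<longrightarrow> Es i *v (F *v c') = 0)"
    then obtain F0 i0 where "F0 \<in> TT" "1 \<le> i0" "i0 \<le> t" "Es i0 *v (F0 *v c') \<noteq> 0" by blast
    then have "good N0" unfolding good_def using N0m unfolding N0_def by blast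
    then obtain W where gW: "good W" and minW: "\<And>U. good U \<Longrightarrow> vec.dim W \<le> vec.dim U"
      using ex_has_least_nat[of good N0 vec.dim] by blast
    have Wm: "is_module TT W" and WN: "W \<subseteq> N0" using gW unfolding good_def by auto
    obtain i1 v1 where i1: "1 \<le> i1" "i1 \<le> t" and v1: "v1 \<in> W" "Es i1 *v v1 \<noteq> 0"
      using gW unfolding good_def by blast
    have sW: "vec.subspace W" using Wm by (rule mod_sub)
    have WP: "hf q w = 0" if "w \<in> W" "q \<in> PP" for w q using N0P WN that by blast
    have Wnz: "W \<noteq> {0}" using v1 by auto
    have irr: "irreducible_module TT W"
      unfolding irreducible_module_def
    proof (intro conjI allI impI Wm Wnz)
      fix U assume "is_module TT U \<and> U \<subseteq> W"
      then have Um: "is_module TT U" and UW: "U \<subseteq> W" by auto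
      show "U = {0} \<or> U = W"
      proof (rule ccontr)
        assume nz: "\<not> (U = {0} \<or> U = W)"
        have sU: "vec.subspace U" using Um by (rule mod_sub)
        show False
        proof (cases "good U")
          case True
          then have "vec.dim W \<le> vec.dim U" by (rule minW)
          moreover have "vec.dim U < vec.dim W" using dimlt[OF sU sW UW] nz by blast
          ultimately show False by simp
        next
          case False
          then have Uz: "Es i *v v = 0" if "1 \<le> i" "i \<le> t" "v \<in> U" for i v
            using Um UW WN that unfolding good_def by blast
          define U' where "U' = {w \<in> W. \<forall>u\<in>U. hf u w = 0}"
          have U'm: "is_module TT U'"
            unfolding is_module_def vec.subspace_def
          proof (intro conjI ballI allI impI)
            show "0 \<in> U'" unfolding U'_def using vec.subspace_0[OF sW] by simp
            show "v + w \<in> U'" if "v \<in> U'" "w \<in> U'" for v w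
              using that vec.subspace_add[OF sW] unfolding U'_def by (simp add: hf_add_r)
            show "c *s v \<in> U'" if "v \<in> U'" for c v
              using that vec.subspace_scale[OF sW] unfolding U'_def by (simp add: hf_scale_r)
            show "F *v w \<in> U'" if "F \<in> TT" "w \<in> U'" for F w
            proof -
              have "F *v w \<in> W" using mod_inv[OF Wm that(1)] that(2) unfolding U'_def by blast
              moreover have "hf u (F *v w) = 0" if "u \<in> U" for u
              proof -
                have "adjM F *v u \<in> U" using mod_inv[OF Um adjM_T[OF \<open>F \<in> TT\<close>] that] .
                then show ?thesis using \<open>w \<in> U'\<close> unfolding U'_def hf_adj' by blast
              qed
              ultimately show ?thesis unfolding U'_def by blast
            qed
          qed
          obtain u1 u2 where u1: "u1 \<in> U" and u2: "\<And>u. u \<in> U \<Longrightarrow> hf u u2 = 0" and v1d: "v1 = u1 + u2"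
            using hf_decomp[OF sU, of v1] by blast
          have "u2 = v1 - u1" using v1d by simp
          then have "u2 \<in> W" using vec.subspace_diff[OF sW v1(1)] u1 UW by blast
          then have u2U': "u2 \<in> U'" using u2 unfolding U'_def by blast
          have "Es i1 *v v1 = Es i1 *v u1 + Es i1 *v u2" unfolding v1d by (rule vec.add)
          then have "Es i1 *v u2 \<noteq> 0" using Uz[OF i1 u1] v1(2) by simp
          then have "good U'" unfolding good_def using U'm WN i1 u2U' unfolding U'_def by blast
          then have "vec.dim W \<le> vec.dim U'" by (rule minW)
          moreover have "vec.dim U' < vec.dim W"
          proof (rule dimlt[OF mod_sub[OF U'm] sW])
            show "U' \<subseteq> W" unfolding U'_def by blast
            obtain u where u: "u \<in> U" "u \<noteq> 0" using nz vec.subspace_0[OF sU] by blast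
            then have "hf u u \<noteq> 0" using hf_self by blast
            then have "u \<notin> U'" using u unfolding U'_def by blast
            then show "U' \<noteq> W" using u UW by blast
          qed
          ultimately show False by simp
        qed
      qed
    qed
    define r where "r = endpoint R x W"
    have rex: "\<exists>w\<in>W. Es r *v w \<noteq> 0"
      unfolding r_def endpoint_def by (rule LeastI[of _ i1]) (use v1 in blast)
    have rle: "r \<le> i1"
      unfolding r_def endpoint_def by (rule Least_le) (use v1 in blast)
    have below: "Es i *v w = 0" if "i < r" "w \<in> W" for i w
      using not_less_Least[OF that(1)[unfolded r_def endpoint_def]] that(2) by blast
    have Es0: "Es 0 *v w = 0" if wW: "w \<in> W" for w
    proof -
      have "w $ x = 0" using WP[OF wW ex_PP] hf_ex by simp
      then show ?thesis by (auto simp: vec_eq_iff Es_mv R0)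
    qed
    have r1: "1 \<le> r" using rex Es0 by (metis less_one not_le)
    have rt: "r \<le> t" using rle i1 by simp
    have thinW: "vec.dim ((\<lambda>w. Es i *v w) ` W) \<le> 1" for i
      using thinh[OF irr rt[unfolded r_def]] unfolding thin_def by blast
    obtain w1 where w1: "w1 \<in> W" "Es r *v w1 \<noteq> 0" using rex by blast
    define w0 where "w0 = Es r *v w1"
    have w0W: "w0 \<in> W" unfolding w0_def using mod_inv[OF Wm Es_T w1(1)] .
    have w0r: "Es r *v w0 = w0" unfolding w0_def by (simp add: Es_Es)
    have w0nz: "w0 \<noteq> 0" unfolding w0_def using w1 by simp
    have Wspan: "W = vec.span (range (\<lambda>k. Ap k w0))"
      by (rule thin_span[OF Wm irr thinW below w0W w0r w0nz])
    obtain u z where u: "u \<in> W" and zW: "\<And>w. w \<in> W \<Longrightarrow> hf w z = 0" and cvuz: "cv = u + z"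
      using hf_decomp[OF sW, of cv] by blast
    have kill: "G *v u = 0" if G: "G \<in> TT" and Gcv: "G *v cv = 0" for G
    proof -
      have Gu: "G *v u \<in> W" using mod_inv[OF Wm G u] .
      have Gz: "hf (G *v u) (G *v z) = 0"
        unfolding hf_adj' using zW mod_inv[OF Wm adjM_T[OF G] Gu] by blast
      have "G *v u = G *v cv - G *v z" unfolding cvuz by (simp add: vec.add)
      then have "hf (G *v u) (G *v u) = hf (G *v u) (G *v cv) - hf (G *v u) (G *v z)"
        by (simp add: hf_minus_r)
      then have "hf (G *v u) (G *v u) = 0" using Gz Gcv by simp
      then show ?thesis by (rule hf_self)
    qed
    have unz: "u \<noteq> 0"
    proof
      assume u0: "u = 0"
      have wc': "hf w c' = 0" if "w \<in> W" for w
      proof -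
        have "c' = z - p" using cv cvuz u0 by (simp add: algebra_simps)
        moreover have "hf w p = 0" using WP[OF that p] hf_cnj[of w p] by simp
        ultimately show ?thesis using zW[OF that] by (simp add: hf_minus_r)
      qed
      have "w = 0" if wW: "w \<in> W" for w
      proof -
        obtain F where F: "F \<in> TT" "w = F *v c'" using WN wW unfolding N0_def by blast
        have "hf w w = hf (adjM F *v w) c'" using F(2) hf_adj'[of w F c'] by simp
        also have "\<dots> = 0" using wc' mod_inv[OF Wm adjM_T[OF F(1)] wW] by blast
        finally show ?thesis by (rule hf_self)
      qed
      then show False using Wnz vec.subspace_0[OF sW] by blast
    qed
    define dl where "dl = delta R x cv"
    have Esd: "Es i *v cv = 0" if "1 \<le> i" "i < dl" for i
      using not_less_Least[OF that(2)[unfolded dl_def delta_def]] that(1) by auto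
    have usupp: "u $ y = 0" if "R x y < dl" for y
    proof (cases "R x y = 0")
      case True
      then show ?thesis using Es0[OF u] Es_mv[of 0 u y] by simp
    next
      case False
      then have "Es (R x y) *v u = 0" using kill[OF Es_T Esd[of "R x y"]] that by simp
      then show ?thesis using Es_mv[of "R x y" u y] by simp
    qed
    define S where "S = {j \<in> dual_support D E W. E j *v cv \<noteq> 0}"
    have SD: "S \<subseteq> {..D}" unfolding S_def dual_support_def by auto
    have Sfin: "finite S" using finite_subset[OF SD] by simp
    have cardS: "card S + r \<le> dl"
      using bound[OF irr r1[unfolded r_def] rt[unfolded r_def]] unfolding S_def dl_def r_def by simp
    have Eu: "E j *v u = 0" if "j \<le> D" "j \<notin> S" for j
    proof (cases "\<exists>w\<in>W. E j *v w \<noteq> 0")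
      case True
      then have "E j *v cv = 0" using that unfolding S_def dual_support_def by auto
      then show ?thesis using kill[OF E_T[OF that(1)]] by simp
    next
      case False then show ?thesis using u by blast
    qed
    have hfAp: "hf (Ap k w0) u = (\<Sum>j\<in>S. th j ^ k * hf w0 (E j *v u))" for k
    proof -
      have "hf (Ap k w0) u = hf w0 (Ap k u)" by (rule hf_Ap)
      also have "\<dots> = (\<Sum>j\<le>D. th j ^ k * hf w0 (E j *v u))"
        unfolding Ap_spec hf_sum_r hf_scale_r ..
      also have "\<dots> = (\<Sum>j\<in>S. th j ^ k * hf w0 (E j *v u))"
        using SD Eu by (intro sum.mono_neutral_right) auto
      finally show ?thesis .
    qed
    have small: "hf (Ap k w0) u = 0" if "k < card S" for k
    proof -
      have sp: "supp_le (r + k) (Ap k w0)" using Ap_supp[OF Es_supp[OF w0r]] .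
      have "cnj (Ap k w0 $ y) * u $ y = 0" for y
      proof (cases "R x y < dl")
        case True then show ?thesis using usupp by simp
      next
        case False
        then have "r + k < R x y" using cardS that by simp
        then show ?thesis using sp unfolding supp_le_def by simp
      qed
      then show ?thesis unfolding hf_def by (intro sum.neutral) blast
    qed
    have cz: "hf w0 (E j *v u) = 0" if "j \<in> S" for j
    proof (rule vandermonde_zero[OF Sfin _ _ that, of th])
      show "inj_on th S" using inj_on_subset[OF th_inj SD] .
      show "(\<Sum>j\<in>S. th j ^ k * hf w0 (E j *v u)) = 0" if "k < card S" for k
        using small[OF that] hfAp by simp
    qed
    have "hf (Ap k w0) u = 0" for k unfolding hfAp using cz by simp
    then have "hf u u = 0" using u Wspan by (intro hf_span_zero[of u "range (\<lambda>k. Ap k w0)"]) auto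
    then show False using unz hf_self by blast
  qed
  show ?thesis
  proof (intro ballI, unfold rel_codesign_def, intro allI impI)
    fix F i assume F: "F \<in> TT" and i: "1 \<le> i \<and> i \<le> t"
    have "Es i *v (F *v cv) = Es i *v (F *v p) + Es i *v (F *v c')" unfolding cv by (simp add: vec.add)
    also have "Es i *v (F *v c') = 0" using key F i by blast
    finally have e: "Es i *v (F *v cv) = Es i *v (F *v p)" by simp
    have "Es i *v (F *v p) \<in> vec.span {colA i}" using Es_PP[OF PP_inv[OF F p]] .
    then obtain k where k: "Es i *v (F *v p) = k *s colA i" unfolding vec.span_singleton by blast
    show "\<exists>a b. (a \<noteq> 0 \<or> b \<noteq> 0) \<and> a *s (Es i *v (F *v cv)) + b *s (adj R i *v axis x 1) = 0"
      by (rule exI[of _ 1], rule exI[of _ "- k"]) (simp add: e k colA_def)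
  qed
qed

end

theorem corollary3p5:
  fixes R :: "'x::finite \<Rightarrow> 'x \<Rightarrow> nat" and D t :: nat
    and E :: "nat \<Rightarrow> complex^'x^'x" and x :: 'x and code_vec :: "complex^'x"
  assumes scheme: "sym_assoc_scheme R D"
    and metric: "metric_scheme R"
    and idem: "primitive_idempotents R D E"
    and code: "is_code R E code_vec"
    and t: "1 \<le> t" "t \<le> D"
    and bound: "\<And>W. irreducible_module (terwilliger R D E x) W \<Longrightarrow>
                  1 \<le> endpoint R x W \<Longrightarrow> endpoint R x W \<le> t \<Longrightarrow>
                  int (card {j \<in> dual_support D E W. E j *v code_vec \<noteq> 0})
                    \<le> int (delta R x code_vec) - int (endpoint R x W)"
    and thin: "\<And>W. irreducible_module (terwilliger R D E x) W \<Longrightarrow>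
                  endpoint R x W \<le> t \<Longrightarrow> thin R x W"
  shows "\<forall>F \<in> terwilliger R D E x. rel_codesign R t x (F *v code_vec)"
proof -
  interpret tw R D E x by (rule tw.intro[OF scheme metric idem])
  show ?thesis by (rule main[OF t bound thin])
qed

end
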